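(* Let $L$ and $R$ be nonempty subsets of a group $G$ with $G=\mathcal{W}(\bar{L})\mathcal{W}(\bar{R})$, and let $k$ be the minimum weak connection length in $G$ relative to $(L,R)$. If $k$ is infinite, then $2\mathrm{S}(G;L,R)$ has infinitely many weakly connected components. If $k$ is finite, then $2\mathrm{S}(G;L,R)$ has exactly $k$ weakly connected components, and all of them have the same number of vertices (the same cardinality). Moreover, if $k$ is finite and $L\cap N_G(L)\neq\emptyset$ or $R\cap N_G(R)\neq\emptyset$, then all weakly connected components are isomorphic as digraphs.
   Context: For nonempty subsets $L,R$ of a group $G$, the two-sided group digraph $2\mathrm{S}(G;L,R)$ has vertex set $G$ and a directed arc $(g,h)$ if and only if $h=l^{-1}gr$ for some $l\in L$, $r\in R$. Write $\bar{L}=L\cup L^{-1}$, $\bar{R}=R\cup R^{-1}$; for nonempty $S$, $\mathcal{W}(S)$ is the set of elements expressible as finite products $s_1\cdots s_n$, $n\ge1$, $s_i\in S$, and $AB=\{ab:a\in A,b\in B\}$. Vertex $g$ is weakly connected to $h$, written $g\sim h$, if there is a sequence $g=g_0,\dots,g_n=h$ such that for each $i$ either $(g_{i-1},g_i)$ or $(g_i,g_{i-1})$ is an arc. The minimum weak connection length in $G$ relative to $(L,R)$ is the minimum positive length $k$ of a word $s_1\cdots s_k$ whose letters all lie in $L$, or all lie in $L^{-1}$, or all lie in $R$, or all lie in $R^{-1}$, and whose value is weakly connected to $e$; it is infinite if no such word exists. $N_G(L)=\{g\in G: g^{-1}Lg=L\}$ is the normalizer of the subset $L$. *)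

theory Defs
  imports "HOL-Algebra.Algebra" "HOL-Library.Extended_Nat"
begin

definition ts_arc :: "('a, 'b) monoid_scheme \<Rightarrow> 'a set \<Rightarrow> 'a set \<Rightarrow> 'a \<Rightarrow> 'a \<Rightarrow> bool" where
  "ts_arc G L R g h \<longleftrightarrow> g \<in> carrier G \<and> h \<in> carrier G \<and>
     (\<exists>l\<in>L. \<exists>r\<in>R. h = inv\<^bsub>G\<^esub> l \<otimes>\<^bsub>G\<^esub> g \<otimes>\<^bsub>G\<^esub> r)"

definition weakly_conn :: "('a, 'b) monoid_scheme \<Rightarrow> 'a set \<Rightarrow> 'a set \<Rightarrow> 'a \<Rightarrow> 'a \<Rightarrow> bool" where
  "weakly_conn G L R = (\<lambda>g h. ts_arc G L R g h \<or> ts_arc G L R h g)\<^sup>*\<^sup>*"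

definition weak_components :: "('a, 'b) monoid_scheme \<Rightarrow> 'a set \<Rightarrow> 'a set \<Rightarrow> 'a set set" where
  "weak_components G L R = {{h \<in> carrier G. weakly_conn G L R g h} | g. g \<in> carrier G}"

definition sym_closure :: "('a, 'b) monoid_scheme \<Rightarrow> 'a set \<Rightarrow> 'a set" where
  "sym_closure G S = S \<union> (\<lambda>s. inv\<^bsub>G\<^esub> s) ` S"

fun words_len :: "('a, 'b) monoid_scheme \<Rightarrow> 'a set \<Rightarrow> nat \<Rightarrow> 'a set" where
  "words_len G S 0 = {\<one>\<^bsub>G\<^esub>}"
| "words_len G S (Suc n) = {w \<otimes>\<^bsub>G\<^esub> s | w s. w \<in> words_len G S n \<and> s \<in> S}"

definition words :: "('a, 'b) monoid_scheme \<Rightarrow> 'a set \<Rightarrow> 'a set" where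
  "words G S = (\<Union>n\<in>{n. n \<ge> 1}. words_len G S n)"

definition conn_lengths :: "('a, 'b) monoid_scheme \<Rightarrow> 'a set \<Rightarrow> 'a set \<Rightarrow> nat set" where
  "conn_lengths G L R = {n. n \<ge> 1 \<and>
     (\<exists>S\<in>{L, (\<lambda>x. inv\<^bsub>G\<^esub> x) ` L, R, (\<lambda>x. inv\<^bsub>G\<^esub> x) ` R}.
        \<exists>w\<in>words_len G S n. weakly_conn G L R w \<one>\<^bsub>G\<^esub>)}"

definition min_weak_conn_len :: "('a, 'b) monoid_scheme \<Rightarrow> 'a set \<Rightarrow> 'a set \<Rightarrow> enat" where
  "min_weak_conn_len G L R = Inf (enat ` conn_lengths G L R)"

definition induced_iso :: "('a, 'b) monoid_scheme \<Rightarrow> 'a set \<Rightarrow> 'a set \<Rightarrow> 'a set \<Rightarrow> 'a set \<Rightarrow> bool" where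
  "induced_iso G L R C D \<longleftrightarrow> (\<exists>f. bij_betw f C D \<and>
     (\<forall>x\<in>C. \<forall>y\<in>C. ts_arc G L R x y \<longleftrightarrow> ts_arc G L R (f x) (f y)))"

end

theory Submission imports Defs begin

lemma int_chain:
  fixes Rl :: "int \<Rightarrow> int \<Rightarrow> bool"
  assumes rf: "\<And>a. Rl a a" and sy: "\<And>a b. Rl a b \<Longrightarrow> Rl b a"
    and tr: "\<And>a b c. Rl a b \<Longrightarrow> Rl b c \<Longrightarrow> Rl a c" and st: "\<And>a. Rl a (a + 1)"
  shows "Rl a b"
proof -
  have up: "Rl x (x + int n)" for x n
  proof (induction n)
    case 0 then show ?case using rf by simp
  next
    case (Suc n)
    have e: "x + int (Suc n) = x + int n + 1" by simp
    show ?case unfolding e by (rule tr[OF Suc st])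
  qed
  show ?thesis
  proof (cases "a \<le> b")
    case True
    then have "b = a + int (nat (b - a))" by simp
    then show ?thesis using up[of a "nat (b - a)"] by simp
  next
    case False
    then have "a = b + int (nat (a - b))" by simp
    then show ?thesis using sy[OF up[of b "nat (a - b)"]] by simp
  qed
qed

lemma ind_iso_refl: "induced_iso G L R A A"
  unfolding induced_iso_def by (intro exI[of _ id]) auto

lemma ind_iso_sym: assumes "induced_iso G L R A B" shows "induced_iso G L R B A"
proof -
  from assms obtain f where f: "bij_betw f A B" and ar: "\<forall>x\<in>A. \<forall>y\<in>A. ts_arc G L R x y \<longleftrightarrow> ts_arc G L R (f x) (f y)"
    unfolding induced_iso_def by blast
  let ?g = "inv_into A f"
  have g: "bij_betw ?g B A" using bij_betw_inv_into[OF f] .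
  have img: "f ` A = B" using f by (simp add: bij_betw_def)
  have "ts_arc G L R x y \<longleftrightarrow> ts_arc G L R (?g x) (?g y)" if "x \<in> B" "y \<in> B" for x y
  proof -
    have gx: "?g x \<in> A" "f (?g x) = x" using that img inv_into_into f_inv_into_f by metis+
    have gy: "?g y \<in> A" "f (?g y) = y" using that img inv_into_into f_inv_into_f by metis+
    show ?thesis using ar gx gy by metis
  qed
  then show ?thesis unfolding induced_iso_def using g by blast
qed

lemma ind_iso_trans: assumes "induced_iso G L R A B" "induced_iso G L R B D" shows "induced_iso G L R A D"
proof -
  from assms(1) obtain f where f: "bij_betw f A B" and ar: "\<forall>x\<in>A. \<forall>y\<in>A. ts_arc G L R x y \<longleftrightarrow> ts_arc G L R (f x) (f y)"
    unfolding induced_iso_def by blast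
  from assms(2) obtain g where g: "bij_betw g B D" and ag: "\<forall>x\<in>B. \<forall>y\<in>B. ts_arc G L R x y \<longleftrightarrow> ts_arc G L R (g x) (g y)"
    unfolding induced_iso_def by blast
  have "bij_betw (g \<circ> f) A D" using bij_betw_trans[OF f g] .
  moreover have "\<forall>x\<in>A. \<forall>y\<in>A. ts_arc G L R x y \<longleftrightarrow> ts_arc G L R ((g \<circ> f) x) ((g \<circ> f) y)"
  proof (intro ballI)
    fix x y assume "x \<in> A" "y \<in> A"
    moreover have "f x \<in> B" "f y \<in> B" using f \<open>x \<in> A\<close> \<open>y \<in> A\<close> bij_betwE by blast+
    ultimately show "ts_arc G L R x y \<longleftrightarrow> ts_arc G L R ((g \<circ> f) x) ((g \<circ> f) y)" using ar ag by simp
  qed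
  ultimately show ?thesis unfolding induced_iso_def by blast
qed

lemma (in group) cancel1: "x \<in> carrier G \<Longrightarrow> y \<in> carrier G \<Longrightarrow> inv x \<otimes> (x \<otimes> y) = y"
  by (simp add: m_assoc[symmetric])
lemma (in group) cancel2: "x \<in> carrier G \<Longrightarrow> y \<in> carrier G \<Longrightarrow> x \<otimes> (inv x \<otimes> y) = y"
  by (simp add: m_assoc[symmetric])

lemma (in group) normalizer_conj:
  assumes H: "H \<subseteq> carrier G" and g: "g \<in> normalizer G H" and h: "h \<in> H"
  shows "g \<otimes> h \<otimes> inv g \<in> H" "inv g \<otimes> h \<otimes> g \<in> H"
proof -
  have gG: "g \<in> carrier G" and eq: "g <# H #> inv g = H"
    using g H unfolding normalizer_def stabilizer_def by auto
  have "g \<otimes> h \<otimes> inv g \<in> g <# H #> inv g" unfolding l_coset_def r_coset_def using h by blast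
  then show "g \<otimes> h \<otimes> inv g \<in> H" using eq by simp
  have "h \<in> g <# H #> inv g" using eq h by simp
  then obtain h' where h': "h' \<in> H" "h = g \<otimes> h' \<otimes> inv g" unfolding l_coset_def r_coset_def by blast
  have h'G: "h' \<in> carrier G" using h' H by auto
  have "inv g \<otimes> h \<otimes> g = h'" using h' gG h'G by (simp add: m_assoc cancel1 cancel2)
  then show "inv g \<otimes> h \<otimes> g \<in> H" using h' by simp
qed

locale tsd = group G for G (structure) +
  fixes L R l0
  assumes LG: "L \<subseteq> carrier G" and RG: "R \<subseteq> carrier G" and l0L: "l0 \<in> L"
    and Rne: "R \<noteq> {}"
    and gen: "carrier G = words G (sym_closure G L) <#> words G (sym_closure G R)"
begin

abbreviation wc where "wc \<equiv> weakly_conn G L R"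
abbreviation s where "s \<equiv> inv l0"
definition sp :: "int \<Rightarrow> 'a" where "sp n = s [^] n"

declare l0L[simp]
lemma l0G[simp]: "l0 \<in> carrier G" using l0L LG by auto
lemma sG[simp]: "s \<in> carrier G" by simp
lemma spG[simp]: "sp n \<in> carrier G" unfolding sp_def by simp

lemma wc_refl: "wc x x" unfolding weakly_conn_def by simp

lemma wc_trans: "wc x y \<Longrightarrow> wc y z \<Longrightarrow> wc x z"
  unfolding weakly_conn_def by (rule rtranclp_trans)

lemma wc_sym: "wc x y \<Longrightarrow> wc y x"
  unfolding weakly_conn_def
proof (induction rule: rtranclp_induct)
  case base then show ?case by simp
next
  case (step y z)
  then show ?case by (metis (mono_tags, lifting) converse_rtranclp_into_rtranclp)
qed

lemma wc_carrier: "wc x y \<Longrightarrow> x \<in> carrier G \<Longrightarrow> y \<in> carrier G"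
  unfolding weakly_conn_def
  by (induction rule: rtranclp_induct) (auto simp: ts_arc_def)

lemma arcF: "l \<in> L \<Longrightarrow> r \<in> R \<Longrightarrow> x \<in> carrier G \<Longrightarrow> y = inv l \<otimes> x \<otimes> r \<Longrightarrow> wc x y"
  unfolding weakly_conn_def
  apply (rule r_into_rtranclp)
  using LG RG by (auto simp: ts_arc_def)

lemma arcB: "l \<in> L \<Longrightarrow> r \<in> R \<Longrightarrow> x \<in> carrier G \<Longrightarrow> y = inv l \<otimes> x \<otimes> r \<Longrightarrow> wc y x"
  using arcF wc_sym by blast

lemma LGm[simp]: "l \<in> L \<Longrightarrow> l \<in> carrier G" using LG by auto
lemma RGm[simp]: "r \<in> R \<Longrightarrow> r \<in> carrier G" using RG by auto

lemma alpha: "l \<in> L \<Longrightarrow> r \<in> R \<Longrightarrow> y \<in> carrier G \<Longrightarrow> wc (inv l \<otimes> y) (y \<otimes> inv r)"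
  by (rule arcB[of l r]) (auto simp: m_assoc)

lemma beta: "l \<in> L \<Longrightarrow> r \<in> R \<Longrightarrow> y \<in> carrier G \<Longrightarrow> wc (l \<otimes> y) (y \<otimes> r)"
  by (rule arcF[of l r]) (auto simp: m_assoc[symmetric])

lemma left_s_arc:
  assumes "ts_arc G L R g h" shows "wc (s \<otimes> g) (s \<otimes> h)" "wc (l0 \<otimes> g) (l0 \<otimes> h)"
proof -
  from assms obtain l r where l: "l \<in> L" and r: "r \<in> R" and g: "g \<in> carrier G"
    and h: "h = inv l \<otimes> g \<otimes> r" by (auto simp: ts_arc_def)
  have 1: "wc (s \<otimes> g) (g \<otimes> inv r)"
    by (rule arcB[of l0 r]) (use l r g in \<open>auto simp: m_assoc\<close>)
  have 2: "wc (g \<otimes> inv r) (inv l \<otimes> g)"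
    by (rule arcF[of l r]) (use l r g in \<open>auto simp: m_assoc\<close>)
  have 3: "wc (inv l \<otimes> g) (s \<otimes> h)"
    by (rule arcF[of l0 r]) (use l r g h in \<open>auto simp: m_assoc\<close>)
  show "wc (s \<otimes> g) (s \<otimes> h)" using 1 2 3 wc_trans by blast
  have 4: "wc (l0 \<otimes> g) (g \<otimes> r)"
    by (rule arcF[of l0 r]) (use l r g in \<open>auto simp: m_assoc[symmetric]\<close>)
  have 5: "wc (g \<otimes> r) (inv l \<otimes> g \<otimes> r \<otimes> r)"
    by (rule arcF[of l r]) (use l r g in \<open>auto simp: m_assoc\<close>)
  have 6: "wc (inv l \<otimes> g \<otimes> r \<otimes> r) (l0 \<otimes> h)"
    by (rule arcB[of l0 r]) (use l r g h in \<open>auto simp: m_assoc[symmetric]\<close>)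
  show "wc (l0 \<otimes> g) (l0 \<otimes> h)" using 4 5 6 wc_trans by blast
qed

lemma wc_left: "wc g h \<Longrightarrow> wc (s \<otimes> g) (s \<otimes> h) \<and> wc (l0 \<otimes> g) (l0 \<otimes> h)"
proof -
  assume "wc g h"
  then have "(\<lambda>g h. ts_arc G L R g h \<or> ts_arc G L R h g)\<^sup>*\<^sup>* g h" unfolding weakly_conn_def .
  then show ?thesis
  proof (induction rule: rtranclp_induct)
    case base then show ?case by (simp add: wc_refl)
  next
    case (step y z)
    have "wc (s \<otimes> y) (s \<otimes> z) \<and> wc (l0 \<otimes> y) (l0 \<otimes> z)"
    proof (cases "ts_arc G L R y z")
      case True then show ?thesis using left_s_arc by blast
    next
      case False then have "ts_arc G L R z y" using step.hyps(2) by blast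
      then show ?thesis using left_s_arc wc_sym by blast
    qed
    then show ?case using step.IH wc_trans by blast
  qed
qed

lemma sp_0[simp]: "sp 0 = \<one>" unfolding sp_def by simp
lemma sp_add: "sp (a + b) = sp a \<otimes> sp b" unfolding sp_def by (simp add: int_pow_mult)
lemma sp_1: "sp 1 = s" unfolding sp_def by simp
lemma sp_m1: "sp (-1) = l0" unfolding sp_def by (simp add: int_pow_neg)
lemma sp_succ: "sp (a + 1) = s \<otimes> sp a" using sp_add[of 1 a] sp_1 by (simp add: add.commute)
lemma sp_pred: "sp (a - 1) = l0 \<otimes> sp a" using sp_add[of "-1" a] sp_m1 by simp
lemma sp_mult: "x \<in> carrier G \<Longrightarrow> sp a \<otimes> (sp b \<otimes> x) = sp (a + b) \<otimes> x"
  by (simp add: sp_add m_assoc)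

lemma wc_sp_left: "wc y z \<Longrightarrow> y \<in> carrier G \<Longrightarrow> z \<in> carrier G \<Longrightarrow> wc (sp n \<otimes> y) (sp n \<otimes> z)"
proof (induction n rule: int_induct[where k=0])
  case base then show ?case by simp
next
  case (step1 i)
  then show ?case using wc_left[of "sp i \<otimes> y" "sp i \<otimes> z"] by (simp add: sp_succ m_assoc)
next
  case (step2 i)
  then show ?case using wc_left[of "sp i \<otimes> y" "sp i \<otimes> z"] by (simp add: sp_pred m_assoc)
qed

lemma r1: "\<exists>r. r \<in> R" using Rne by auto

lemma L_letter: "l \<in> L \<Longrightarrow> x \<in> carrier G \<Longrightarrow> wc (l \<otimes> x) (sp (-1) \<otimes> x)"
proof -
  assume a: "l \<in> L" "x \<in> carrier G"
  obtain r where r: "r \<in> R" using r1 by blast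
  show ?thesis unfolding sp_m1 using wc_trans[OF beta[OF a(1) r a(2)] wc_sym[OF beta[OF l0L r a(2)]]] .
qed
lemma invL_letter: "l \<in> L \<Longrightarrow> x \<in> carrier G \<Longrightarrow> wc (inv l \<otimes> x) (sp 1 \<otimes> x)"
proof -
  assume a: "l \<in> L" "x \<in> carrier G"
  obtain r where r: "r \<in> R" using r1 by blast
  show ?thesis unfolding sp_1 using wc_trans[OF alpha[OF a(1) r a(2)] wc_sym[OF alpha[OF l0L r a(2)]]] .
qed
lemma R_letter: "r \<in> R \<Longrightarrow> x \<in> carrier G \<Longrightarrow> wc (x \<otimes> r) (sp (-1) \<otimes> x)"
  unfolding sp_m1 by (rule wc_sym[OF beta[OF l0L]])
lemma invR_letter: "r \<in> R \<Longrightarrow> x \<in> carrier G \<Longrightarrow> wc (x \<otimes> inv r) (sp 1 \<otimes> x)"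
  unfolding sp_1 by (rule wc_sym[OF alpha[OF l0L]])

lemma words_len_carrier: "S \<subseteq> carrier G \<Longrightarrow> w \<in> words_len G S m \<Longrightarrow> w \<in> carrier G"
  by (induction m arbitrary: w) auto

lemma left_word_exact:
  assumes S: "S \<subseteq> carrier G" and lt: "\<And>t x. t \<in> S \<Longrightarrow> x \<in> carrier G \<Longrightarrow> wc (t \<otimes> x) (sp d \<otimes> x)"
  shows "w \<in> words_len G S m \<Longrightarrow> x \<in> carrier G \<Longrightarrow> wc (w \<otimes> x) (sp (int m * d) \<otimes> x)"
proof (induction m arbitrary: w x)
  case 0 then show ?case by (simp add: wc_refl)
next
  case (Suc m)
  then obtain w' t where w: "w = w' \<otimes> t" and w': "w' \<in> words_len G S m" and t: "t \<in> S" by auto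
  have w'G: "w' \<in> carrier G" using words_len_carrier[OF S w'] .
  have tG: "t \<in> carrier G" using t S by auto
  have 1: "wc (w' \<otimes> (t \<otimes> x)) (sp (int m * d) \<otimes> (t \<otimes> x))" using Suc.IH[OF w'] tG Suc.prems(2) by simp
  have 2: "wc (sp (int m * d) \<otimes> (t \<otimes> x)) (sp (int m * d) \<otimes> (sp d \<otimes> x))"
    using wc_sp_left lt[OF t Suc(3)] tG Suc(3) by simp
  have 3: "sp (int m * d) \<otimes> (sp d \<otimes> x) = sp (int (Suc m) * d) \<otimes> x"
    using Suc(3) sp_mult[of x "int m * d" d] by (simp add: distrib_right add.commute)
  have 4: "w \<otimes> x = w' \<otimes> (t \<otimes> x)" using w w'G tG Suc(3) by (simp add: m_assoc)
  show ?case unfolding 4 3[symmetric] by (rule wc_trans[OF 1 2])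
qed

lemma left_word_ex:
  assumes S: "S \<subseteq> carrier G" and lt: "\<And>t x. t \<in> S \<Longrightarrow> x \<in> carrier G \<Longrightarrow> \<exists>d. wc (t \<otimes> x) (sp d \<otimes> x)"
  shows "w \<in> words_len G S m \<Longrightarrow> x \<in> carrier G \<Longrightarrow> \<exists>n. wc (w \<otimes> x) (sp n \<otimes> x)"
proof (induction m arbitrary: w x)
  case 0 then show ?case using wc_refl[of x] by (intro exI[of _ 0]) simp
next
  case (Suc m)
  then obtain w' t where w: "w = w' \<otimes> t" and w': "w' \<in> words_len G S m" and t: "t \<in> S" by auto
  have w'G: "w' \<in> carrier G" using words_len_carrier[OF S w'] .
  have tG: "t \<in> carrier G" using t S by auto
  obtain n where 1: "wc (w' \<otimes> (t \<otimes> x)) (sp n \<otimes> (t \<otimes> x))" using Suc.IH[OF w'] tG Suc.prems(2) by blast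
  obtain d where d: "wc (t \<otimes> x) (sp d \<otimes> x)" using lt[OF t Suc(3)] by blast
  have 2: "wc (sp n \<otimes> (t \<otimes> x)) (sp n \<otimes> (sp d \<otimes> x))"
    using wc_sp_left d tG Suc(3) by simp
  have 3: "sp n \<otimes> (sp d \<otimes> x) = sp (n + d) \<otimes> x"
    using Suc(3) by (simp add: sp_mult)
  have 4: "w \<otimes> x = w' \<otimes> (t \<otimes> x)" using w w'G tG Suc(3) by (simp add: m_assoc)
  show ?case unfolding 4 using wc_trans[OF 1 2] unfolding 3 by blast
qed

lemma right_word_exact:
  assumes S: "S \<subseteq> carrier G" and lt: "\<And>t x. t \<in> S \<Longrightarrow> x \<in> carrier G \<Longrightarrow> wc (x \<otimes> t) (sp d \<otimes> x)"
  shows "w \<in> words_len G S m \<Longrightarrow> x \<in> carrier G \<Longrightarrow> wc (x \<otimes> w) (sp (int m * d) \<otimes> x)"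
proof (induction m arbitrary: w x)
  case 0 then show ?case by (simp add: wc_refl)
next
  case (Suc m)
  then obtain w' t where w: "w = w' \<otimes> t" and w': "w' \<in> words_len G S m" and t: "t \<in> S" by auto
  have w'G: "w' \<in> carrier G" using words_len_carrier[OF S w'] .
  have tG: "t \<in> carrier G" using t S by auto
  have 1: "wc (x \<otimes> w' \<otimes> t) (sp d \<otimes> (x \<otimes> w'))" using lt[OF t] w'G Suc(3) by simp
  have 2: "wc (sp d \<otimes> (x \<otimes> w')) (sp d \<otimes> (sp (int m * d) \<otimes> x))"
    by (rule wc_sp_left[OF Suc.IH[OF w' Suc.prems(2)]]) (use w'G Suc.prems(2) in auto)
  have 3: "sp d \<otimes> (sp (int m * d) \<otimes> x) = sp (int (Suc m) * d) \<otimes> x"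
    using Suc(3) sp_mult[of x d "int m * d"] by (simp add: distrib_right add.commute)
  have 4: "x \<otimes> w = x \<otimes> w' \<otimes> t" using w w'G tG Suc(3) by (simp add: m_assoc)
  show ?case unfolding 4 3[symmetric] by (rule wc_trans[OF 1 2])
qed

lemma right_word_ex:
  assumes S: "S \<subseteq> carrier G" and lt: "\<And>t x. t \<in> S \<Longrightarrow> x \<in> carrier G \<Longrightarrow> \<exists>d. wc (x \<otimes> t) (sp d \<otimes> x)"
  shows "w \<in> words_len G S m \<Longrightarrow> x \<in> carrier G \<Longrightarrow> \<exists>n. wc (x \<otimes> w) (sp n \<otimes> x)"
proof (induction m arbitrary: w x)
  case 0 then show ?case using wc_refl[of x] by (intro exI[of _ 0]) simp
next
  case (Suc m)
  then obtain w' t where w: "w = w' \<otimes> t" and w': "w' \<in> words_len G S m" and t: "t \<in> S" by auto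
  have w'G: "w' \<in> carrier G" using words_len_carrier[OF S w'] .
  have tG: "t \<in> carrier G" using t S by auto
  obtain d where 1: "wc (x \<otimes> w' \<otimes> t) (sp d \<otimes> (x \<otimes> w'))" using lt[OF t] w'G Suc(3) by blast
  obtain n where n: "wc (x \<otimes> w') (sp n \<otimes> x)" using Suc.IH[OF w' Suc.prems(2)] by blast
  have 2: "wc (sp d \<otimes> (x \<otimes> w')) (sp d \<otimes> (sp n \<otimes> x))"
    using wc_sp_left n w'G Suc(3) by simp
  have 3: "sp d \<otimes> (sp n \<otimes> x) = sp (d + n) \<otimes> x"
    using Suc(3) by (simp add: sp_mult)
  have 4: "x \<otimes> w = x \<otimes> w' \<otimes> t" using w w'G tG Suc(3) by (simp add: m_assoc)
  show ?case unfolding 4 using wc_trans[OF 1 2] unfolding 3 by blast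
qed

lemma symL_sub: "sym_closure G L \<subseteq> carrier G" unfolding sym_closure_def by auto
lemma symR_sub: "sym_closure G R \<subseteq> carrier G" unfolding sym_closure_def by auto

lemma reach_sp: assumes g: "g \<in> carrier G" shows "\<exists>n. wc g (sp n)"
proof -
  from g gen obtain a b ma mb where a: "a \<in> words_len G (sym_closure G L) ma"
    and b: "b \<in> words_len G (sym_closure G R) mb" and gab: "g = a \<otimes> b"
    unfolding set_mult_def words_def by blast
  have aG: "a \<in> carrier G" using words_len_carrier[OF symL_sub a] .
  have bG: "b \<in> carrier G" using words_len_carrier[OF symR_sub b] .
  obtain n1 where 1: "wc (a \<otimes> b) (sp n1 \<otimes> b)"
    using left_word_ex[OF symL_sub _ a bG] L_letter invL_letter unfolding sym_closure_def by blast
  obtain n2 where 2: "wc (\<one> \<otimes> b) (sp n2 \<otimes> \<one>)"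
    using right_word_ex[OF symR_sub _ b one_closed] R_letter invR_letter unfolding sym_closure_def by blast
  have 3: "wc (sp n1 \<otimes> b) (sp n1 \<otimes> sp n2)" using wc_sp_left 2 bG by simp
  have 4: "sp n1 \<otimes> sp n2 = sp (n1 + n2)" by (simp add: sp_add)
  have "wc g (sp (n1 + n2))" using wc_trans[OF 1 3] unfolding 4 gab .
  then show ?thesis by blast
qed

definition C :: "int \<Rightarrow> 'a set" where "C n = {h \<in> carrier G. wc (sp n) h}"

lemma comp_eq: assumes "wc g g'" shows "{h \<in> carrier G. wc g h} = {h \<in> carrier G. wc g' h}"
proof -
  have "wc g h = wc g' h" for h
  proof
    assume "wc g h" then show "wc g' h" by (rule wc_trans[OF wc_sym[OF assms]])
  next
    assume "wc g' h" then show "wc g h" by (rule wc_trans[OF assms])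
  qed
  then show ?thesis by simp
qed

lemma comps: "weak_components G L R = range C"
proof -
  have 1: "{h \<in> carrier G. wc g h} \<in> range C" if g: "g \<in> carrier G" for g
  proof -
    obtain n where "wc g (sp n)" using reach_sp[OF g] by blast
    then have "{h \<in> carrier G. wc g h} = C n" unfolding C_def by (rule comp_eq)
    then show ?thesis by simp
  qed
  have 2: "C n \<in> weak_components G L R" for n
  proof -
    show ?thesis unfolding C_def weak_components_def
      by (rule CollectI, rule exI[of _ "sp n"], simp)
  qed
  have A: "weak_components G L R \<subseteq> range C"
  proof
    fix Y assume "Y \<in> weak_components G L R"
    then obtain g where "g \<in> carrier G" "Y = {h \<in> carrier G. wc g h}" unfolding weak_components_def by auto
    then show "Y \<in> range C" using 1 by simp
  qed
  have B: "range C \<subseteq> weak_components G L R" using 2 by (simp add: image_subset_iff)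
  show ?thesis using A B by (rule equalityI)
qed

definition P :: "int set" where "P = {d. wc (sp d) \<one>}"

lemma C_eq_iff: "C a = C b \<longleftrightarrow> a - b \<in> P"
proof -
  have "C a = C b \<longleftrightarrow> wc (sp a) (sp b)"
  proof
    assume "C a = C b"
    moreover have "sp b \<in> C b" unfolding C_def using wc_refl by simp
    ultimately have "sp b \<in> C a" by simp
    then show "wc (sp a) (sp b)" unfolding C_def by simp
  next
    assume "wc (sp a) (sp b)" then show "C a = C b" unfolding C_def by (rule comp_eq)
  qed
  also have "\<dots> \<longleftrightarrow> wc (sp (a - b)) \<one>"
  proof
    assume "wc (sp a) (sp b)"
    from wc_sp_left[OF this, of "-b"] have "wc (sp (-b) \<otimes> sp a) (sp (-b) \<otimes> sp b)" by simp
    moreover have "sp (-b) \<otimes> sp a = sp (a - b)" using sp_add[of "-b" a] by simp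
    moreover have "sp (-b) \<otimes> sp b = \<one>" using sp_add[of "-b" b] by simp
    ultimately show "wc (sp (a - b)) \<one>" by simp
  next
    assume "wc (sp (a - b)) \<one>"
    from wc_sp_left[OF this, of "b"] have "wc (sp b \<otimes> sp (a - b)) (sp b \<otimes> \<one>)" by simp
    moreover have "sp b \<otimes> sp (a - b) = sp a" using sp_add[of b "a - b"] by simp
    ultimately show "wc (sp a) (sp b)" by simp
  qed
  finally show ?thesis unfolding P_def by simp
qed

lemma P_0: "0 \<in> P" unfolding P_def by (simp add: wc_refl)
lemma P_neg: assumes "d \<in> P" shows "-d \<in> P"
proof -
  have "C d = C 0" using C_eq_iff[of d 0] assms by simp
  then have "C 0 = C d" by (rule sym)
  then show ?thesis using C_eq_iff[of 0 d] by simp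
qed
lemma P_add: assumes "a \<in> P" "b \<in> P" shows "a + b \<in> P"
proof -
  have 1: "C b = C 0" using C_eq_iff[of b 0] assms by simp
  have "C (a + b) = C b" using C_eq_iff[of "a + b" b] assms by simp
  then have "C (a + b) = C 0" using 1 by simp
  then show ?thesis using C_eq_iff[of "a + b" 0] by simp
qed
lemma P_mult_nat: assumes "d \<in> P" shows "d * int q \<in> P"
proof (induction q)
  case 0 then show ?case using P_0 by simp
next
  case (Suc q)
  have "d * int (Suc q) = d * int q + d" by (simp add: distrib_left)
  then show ?case using P_add[OF Suc assms] by simp
qed
lemma P_mult: assumes d: "d \<in> P" shows "d * q \<in> P"
proof (cases "q \<ge> 0")
  case True then show ?thesis using P_mult_nat[OF d, of "nat q"] by simp
next
  case False then show ?thesis using P_mult_nat[OF d, of "nat (-q)"] P_neg by fastforce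
qed

lemma s_pow_word: "s [^] (m::nat) \<in> words_len G ((\<lambda>x. inv x) ` L) m"
proof (induction m)
  case 0 then show ?case by simp
next
  case (Suc m)
  have mem: "s \<in> (\<lambda>x. inv x) ` L" using l0L by blast
  have "s [^] m \<otimes> s \<in> {w \<otimes> x | w x. w \<in> words_len G ((\<lambda>x. inv x) ` L) m \<and> x \<in> (\<lambda>x. inv x) ` L}"
    apply (rule CollectI) apply (rule exI[of _ "s [^] m"]) apply (rule exI[of _ s])
    using Suc mem by simp
  then show ?case by (simp add: nat_pow_Suc)
qed

lemma conn_lengths_eq: "conn_lengths G L R = {m. 1 \<le> m \<and> int m \<in> P}"
proof -
  have A: "int m \<in> P" if m: "1 \<le> m" and S: "S \<in> {L, (\<lambda>x. inv x) ` L, R, (\<lambda>x. inv x) ` R}"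
    and w: "w \<in> words_len G S m" and we: "wc w \<one>" for m S w
  proof -
    have SG: "S \<subseteq> carrier G" using S LG RG by auto
    have wG: "w \<in> carrier G" using words_len_carrier[OF SG w] .
    consider "S = L" | "S = (\<lambda>x. inv x) ` L" | "S = R" | "S = (\<lambda>x. inv x) ` R" using S by auto
    then show ?thesis
    proof cases
      case 1
      have "wc (w \<otimes> \<one>) (sp (int m * -1) \<otimes> \<one>)"
      proof -
        have "\<And>t x. t \<in> S \<Longrightarrow> x \<in> carrier G \<Longrightarrow> wc (t \<otimes> x) (sp (-1) \<otimes> x)"
          using L_letter 1 by simp
        from left_word_exact[OF SG this w one_closed] show ?thesis .
      qed
      then have "wc w (sp (- int m))" using wG by simp
      then have "wc (sp (- int m)) \<one>" using wc_trans[OF wc_sym we] by blast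
      then have "- int m \<in> P" unfolding P_def by simp
      from P_neg[OF this] show ?thesis by simp
    next
      case 2
      have "wc (w \<otimes> \<one>) (sp (int m * 1) \<otimes> \<one>)"
      proof -
        have "\<And>t x. t \<in> S \<Longrightarrow> x \<in> carrier G \<Longrightarrow> wc (t \<otimes> x) (sp (1) \<otimes> x)"
          using invL_letter 2 by auto
        from left_word_exact[OF SG this w one_closed] show ?thesis .
      qed
      then have "wc w (sp (int m))" using wG by simp
      then have "wc (sp (int m)) \<one>" using wc_trans[OF wc_sym we] by blast
      then show ?thesis unfolding P_def by simp
    next
      case 3
      have "wc (\<one> \<otimes> w) (sp (int m * -1) \<otimes> \<one>)"
      proof -
        have "\<And>t x. t \<in> S \<Longrightarrow> x \<in> carrier G \<Longrightarrow> wc (x \<otimes> t) (sp (-1) \<otimes> x)"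
          using R_letter 3 by simp
        from right_word_exact[OF SG this w one_closed] show ?thesis .
      qed
      then have "wc w (sp (- int m))" using wG by simp
      then have "wc (sp (- int m)) \<one>" using wc_trans[OF wc_sym we] by blast
      then have "- int m \<in> P" unfolding P_def by simp
      from P_neg[OF this] show ?thesis by simp
    next
      case 4
      have "wc (\<one> \<otimes> w) (sp (int m * 1) \<otimes> \<one>)"
      proof -
        have "\<And>t x. t \<in> S \<Longrightarrow> x \<in> carrier G \<Longrightarrow> wc (x \<otimes> t) (sp (1) \<otimes> x)"
          using invR_letter 4 by auto
        from right_word_exact[OF SG this w one_closed] show ?thesis .
      qed
      then have "wc w (sp (int m))" using wG by simp
      then have "wc (sp (int m)) \<one>" using wc_trans[OF wc_sym we] by blast
      then show ?thesis unfolding P_def by simp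
    qed
  qed
  have B: "m \<in> conn_lengths G L R" if "1 \<le> m" "int m \<in> P" for m
  proof -
    have "sp (int m) = s [^] m" unfolding sp_def by (simp add: int_pow_int)
    then have we: "wc (s [^] m) \<one>" using that(2) unfolding P_def by simp
    have Sin: "(\<lambda>x. inv x) ` L \<in> {L, (\<lambda>x. inv x) ` L, R, (\<lambda>x. inv x) ` R}" by simp
    have "\<exists>w\<in>words_len G ((\<lambda>x. inv x) ` L) m. wc w \<one>" using we s_pow_word[of m] by blast
    then have "\<exists>S\<in>{L, (\<lambda>x. inv x) ` L, R, (\<lambda>x. inv x) ` R}. \<exists>w\<in>words_len G S m. wc w \<one>"
      using Sin by blast
    then show ?thesis unfolding conn_lengths_def using that(1) by simp
  qed
  show ?thesis
  proof (rule Set.set_eqI)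
    fix m
    show "m \<in> conn_lengths G L R \<longleftrightarrow> m \<in> {m. 1 \<le> m \<and> int m \<in> P}"
    proof
      assume "m \<in> conn_lengths G L R"
      then obtain S w where "1 \<le> m" "S \<in> {L, (\<lambda>x. inv x) ` L, R, (\<lambda>x. inv x) ` R}"
        "w \<in> words_len G S m" "wc w \<one>" unfolding conn_lengths_def by blast
      then show "m \<in> {m. 1 \<le> m \<and> int m \<in> P}" using A by blast
    next
      assume "m \<in> {m. 1 \<le> m \<and> int m \<in> P}"
      then show "m \<in> conn_lengths G L R" using B by blast
    qed
  qed
qed

lemma CG: "y \<in> C a \<Longrightarrow> y \<in> carrier G" unfolding C_def by simp

lemma bijL_step: "bij_betw (\<lambda>y. s \<otimes> y) (C a) (C (a + 1))"
proof (rule bij_betw_byWitness[where f'="\<lambda>y. l0 \<otimes> y"])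
  show "\<forall>y\<in>C a. l0 \<otimes> (s \<otimes> y) = y" using CG by (simp add: m_assoc[symmetric])
  show "\<forall>y\<in>C (a + 1). s \<otimes> (l0 \<otimes> y) = y" using CG by (simp add: m_assoc[symmetric])
  show "(\<lambda>y. s \<otimes> y) ` C a \<subseteq> C (a + 1)"
  proof
    fix z assume "z \<in> (\<lambda>y. s \<otimes> y) ` C a"
    then obtain y where y: "y \<in> C a" "z = s \<otimes> y" by blast
    have "wc (sp a) y" using y unfolding C_def by simp
    then have "wc (s \<otimes> sp a) (s \<otimes> y)" using wc_left by blast
    then show "z \<in> C (a + 1)" using y CG[OF y(1)] unfolding C_def by (simp add: sp_succ)
  qed
  show "(\<lambda>y. l0 \<otimes> y) ` C (a + 1) \<subseteq> C a"
  proof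
    fix z assume "z \<in> (\<lambda>y. l0 \<otimes> y) ` C (a + 1)"
    then obtain y where y: "y \<in> C (a + 1)" "z = l0 \<otimes> y" by blast
    have "wc (sp (a + 1)) y" using y unfolding C_def by simp
    then have "wc (l0 \<otimes> sp (a + 1)) (l0 \<otimes> y)" using wc_left by blast
    moreover have "l0 \<otimes> sp (a + 1) = sp a" using sp_pred[of "a + 1"] by simp
    ultimately show "z \<in> C a" using y CG[OF y(1)] unfolding C_def by simp
  qed
qed

lemma bijR_step: assumes r0: "r0 \<in> R" shows "bij_betw (\<lambda>y. y \<otimes> r0) (C (a + 1)) (C a)"
proof (rule bij_betw_byWitness[where f'="\<lambda>y. y \<otimes> inv r0"])
  have r0G: "r0 \<in> carrier G" using r0 by simp
  show "\<forall>y\<in>C (a + 1). y \<otimes> r0 \<otimes> inv r0 = y" using CG r0G by (simp add: m_assoc)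
  show "\<forall>y\<in>C a. y \<otimes> inv r0 \<otimes> r0 = y" using CG r0G by (simp add: m_assoc)
  show "(\<lambda>y. y \<otimes> r0) ` C (a + 1) \<subseteq> C a"
  proof
    fix z assume "z \<in> (\<lambda>y. y \<otimes> r0) ` C (a + 1)"
    then obtain y where y: "y \<in> C (a + 1)" "z = y \<otimes> r0" by blast
    have yG: "y \<in> carrier G" using CG[OF y(1)] .
    have "wc (sp (a + 1)) y" using y unfolding C_def by simp
    then have "wc (l0 \<otimes> sp (a + 1)) (l0 \<otimes> y)" using wc_left by blast
    moreover have "l0 \<otimes> sp (a + 1) = sp a" using sp_pred[of "a + 1"] by simp
    ultimately have 1: "wc (sp a) (l0 \<otimes> y)" by simp
    have 2: "wc (l0 \<otimes> y) (y \<otimes> r0)" using beta[OF l0L r0 yG] .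
    show "z \<in> C a" using wc_trans[OF 1 2] y yG r0G unfolding C_def by simp
  qed
  show "(\<lambda>y. y \<otimes> inv r0) ` C a \<subseteq> C (a + 1)"
  proof
    fix z assume "z \<in> (\<lambda>y. y \<otimes> inv r0) ` C a"
    then obtain y where y: "y \<in> C a" "z = y \<otimes> inv r0" by blast
    have yG: "y \<in> carrier G" using CG[OF y(1)] .
    have "wc (sp a) y" using y unfolding C_def by simp
    then have "wc (s \<otimes> sp a) (s \<otimes> y)" using wc_left by blast
    then have 1: "wc (sp (a + 1)) (s \<otimes> y)" by (simp add: sp_succ)
    have 2: "wc (s \<otimes> y) (y \<otimes> inv r0)" using alpha[OF l0L r0 yG] .
    show "z \<in> C (a + 1)" using wc_trans[OF 1 2] y yG r0 unfolding C_def by simp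
  qed
qed

lemma all_bij: "A \<in> weak_components G L R \<Longrightarrow> B \<in> weak_components G L R \<Longrightarrow> \<exists>f. bij_betw f A B"
proof -
  have "\<exists>f. bij_betw f (C a) (C b)" for a b
  proof (rule int_chain[where Rl="\<lambda>a b. \<exists>f. bij_betw f (C a) (C b)"])
    show "\<exists>f. bij_betw f (C a) (C a)" for a using bij_betw_id by blast
    show "\<exists>f. bij_betw f (C b) (C a)" if "\<exists>f. bij_betw f (C a) (C b)" for a b
      using that bij_betw_inv_into by blast
    show "\<exists>f. bij_betw f (C a) (C c)" if "\<exists>f. bij_betw f (C a) (C b)" "\<exists>f. bij_betw f (C b) (C c)" for a b c
      using that bij_betw_trans by blast
    show "\<exists>f. bij_betw f (C a) (C (a + 1))" for a using bijL_step by blast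
  qed
  then show "A \<in> weak_components G L R \<Longrightarrow> B \<in> weak_components G L R \<Longrightarrow> \<exists>f. bij_betw f A B"
    unfolding comps by blast
qed

lemma arcL_conj:
  assumes n: "l0 \<in> normalizer G L" and x: "x \<in> carrier G" and y: "y \<in> carrier G"
  shows "ts_arc G L R x y \<longleftrightarrow> ts_arc G L R (s \<otimes> x) (s \<otimes> y)"
proof
  assume "ts_arc G L R x y"
  then obtain l r where l: "l \<in> L" and r: "r \<in> R" and yeq: "y = inv l \<otimes> x \<otimes> r" unfolding ts_arc_def by blast
  have l': "inv l0 \<otimes> l \<otimes> l0 \<in> L" using normalizer_conj(2)[OF LG n l] .
  have lG: "l \<in> carrier G" "r \<in> carrier G" using l r by auto
  have "inv (inv l0 \<otimes> l \<otimes> l0) = inv l0 \<otimes> inv l \<otimes> l0" using lG by (simp add: inv_mult_group m_assoc)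
  then have "s \<otimes> y = inv (inv l0 \<otimes> l \<otimes> l0) \<otimes> (s \<otimes> x) \<otimes> r" using yeq lG x by (simp add: m_assoc cancel1 cancel2)
  then show "ts_arc G L R (s \<otimes> x) (s \<otimes> y)" unfolding ts_arc_def using l' r x y by auto
next
  assume "ts_arc G L R (s \<otimes> x) (s \<otimes> y)"
  then obtain l r where l: "l \<in> L" and r: "r \<in> R" and yeq: "s \<otimes> y = inv l \<otimes> (s \<otimes> x) \<otimes> r" unfolding ts_arc_def by blast
  have l': "l0 \<otimes> l \<otimes> inv l0 \<in> L" using normalizer_conj(1)[OF LG n l] .
  have lG: "l \<in> carrier G" "r \<in> carrier G" using l r by auto
  have "y = l0 \<otimes> (s \<otimes> y)" using y by (simp add: m_assoc[symmetric])
  also have "\<dots> = l0 \<otimes> (inv l \<otimes> (s \<otimes> x) \<otimes> r)" using yeq by simp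
  also have "\<dots> = inv (l0 \<otimes> l \<otimes> inv l0) \<otimes> x \<otimes> r" using lG x by (simp add: inv_mult_group m_assoc cancel1 cancel2)
  finally show "ts_arc G L R x y" unfolding ts_arc_def using l' r x y by auto
qed

lemma arcR_conj:
  assumes r0: "r0 \<in> R" and n: "r0 \<in> normalizer G R" and x: "x \<in> carrier G" and y: "y \<in> carrier G"
  shows "ts_arc G L R x y \<longleftrightarrow> ts_arc G L R (x \<otimes> r0) (y \<otimes> r0)"
proof
  have r0G: "r0 \<in> carrier G" using r0 by simp
  assume "ts_arc G L R x y"
  then obtain l r where l: "l \<in> L" and r: "r \<in> R" and yeq: "y = inv l \<otimes> x \<otimes> r" unfolding ts_arc_def by blast
  have r': "inv r0 \<otimes> r \<otimes> r0 \<in> R" using normalizer_conj(2)[OF RG n r] .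
  have lG: "l \<in> carrier G" "r \<in> carrier G" using l r by auto
  have "y \<otimes> r0 = inv l \<otimes> (x \<otimes> r0) \<otimes> (inv r0 \<otimes> r \<otimes> r0)" using yeq lG x r0G by (simp add: m_assoc cancel1 cancel2)
  then show "ts_arc G L R (x \<otimes> r0) (y \<otimes> r0)" unfolding ts_arc_def using l r' x y r0G by auto
next
  have r0G: "r0 \<in> carrier G" using r0 by simp
  assume "ts_arc G L R (x \<otimes> r0) (y \<otimes> r0)"
  then obtain l r where l: "l \<in> L" and r: "r \<in> R" and yeq: "y \<otimes> r0 = inv l \<otimes> (x \<otimes> r0) \<otimes> r" unfolding ts_arc_def by blast
  have r': "r0 \<otimes> r \<otimes> inv r0 \<in> R" using normalizer_conj(1)[OF RG n r] .
  have lG: "l \<in> carrier G" "r \<in> carrier G" using l r by auto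
  have "y = y \<otimes> r0 \<otimes> inv r0" using y r0G by (simp add: m_assoc cancel1 cancel2)
  also have "\<dots> = inv l \<otimes> (x \<otimes> r0) \<otimes> r \<otimes> inv r0" using yeq by simp
  also have "\<dots> = inv l \<otimes> x \<otimes> (r0 \<otimes> r \<otimes> inv r0)" using lG x r0G by (simp add: m_assoc cancel1 cancel2)
  finally show "ts_arc G L R x y" unfolding ts_arc_def using l r' x y by auto
qed

lemma iso_all_C:
  assumes st: "\<And>a. induced_iso G L R (C a) (C (a + 1))"
  shows "\<forall>A\<in>weak_components G L R. \<forall>B\<in>weak_components G L R. induced_iso G L R A B"
proof -
  have "induced_iso G L R (C a) (C b)" for a b
  proof (rule int_chain[where Rl="\<lambda>a b. induced_iso G L R (C a) (C b)"])
    show "induced_iso G L R (C a) (C a)" for a by (rule ind_iso_refl)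
    show "induced_iso G L R (C b) (C a)" if "induced_iso G L R (C a) (C b)" for a b
      using that by (rule ind_iso_sym)
    show "induced_iso G L R (C a) (C c)" if "induced_iso G L R (C a) (C b)" "induced_iso G L R (C b) (C c)" for a b c
      using that by (rule ind_iso_trans)
    show "induced_iso G L R (C a) (C (a + 1))" for a by (rule st)
  qed
  then show ?thesis unfolding comps by blast
qed

lemma iso_L: assumes n: "l0 \<in> normalizer G L"
  shows "\<forall>A\<in>weak_components G L R. \<forall>B\<in>weak_components G L R. induced_iso G L R A B"
proof (rule iso_all_C)
  fix a
  show "induced_iso G L R (C a) (C (a + 1))" unfolding induced_iso_def
    using bijL_step[of a] arcL_conj[OF n] CG by blast
qed

lemma iso_R: assumes r0: "r0 \<in> R" and n: "r0 \<in> normalizer G R"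
  shows "\<forall>A\<in>weak_components G L R. \<forall>B\<in>weak_components G L R. induced_iso G L R A B"
proof (rule iso_all_C)
  fix a
  have "induced_iso G L R (C (a + 1)) (C a)" unfolding induced_iso_def
    using bijR_step[OF r0, of a] arcR_conj[OF r0 n] CG by blast
  then show "induced_iso G L R (C a) (C (a + 1))" by (rule ind_iso_sym)
qed

lemma main_inf: assumes inf: "min_weak_conn_len G L R = \<infinity>" shows "infinite (weak_components G L R)"
proof -
  have CL: "conn_lengths G L R = {}"
  proof (rule ccontr)
    assume "conn_lengths G L R \<noteq> {}"
    then obtain m where m: "m \<in> conn_lengths G L R" by blast
    have "min_weak_conn_len G L R \<le> enat m" unfolding min_weak_conn_len_def
      by (rule Inf_lower) (use m in blast)
    with inf show False by simp
  qed
  have inj: "inj C"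
  proof (rule injI)
    fix a b assume "C a = C b"
    then have d: "a - b \<in> P" by (simp add: C_eq_iff)
    show "a = b"
    proof (rule ccontr)
      assume ab: "a \<noteq> b"
      have "\<bar>a - b\<bar> \<in> P"
      proof (cases "a - b \<ge> 0")
        case True then show ?thesis using d by simp
      next
        case False then show ?thesis using P_neg[OF d] by simp
      qed
      then have "nat \<bar>a - b\<bar> \<in> conn_lengths G L R" unfolding conn_lengths_eq using ab by simp
      with CL show False by simp
    qed
  qed
  have "infinite (range C)"
  proof
    assume "finite (range C)"
    from finite_imageD[OF this] inj show False by simp
  qed
  then show ?thesis unfolding comps .
qed

lemma main_fin: assumes kk: "min_weak_conn_len G L R = enat k"
  shows "card (weak_components G L R) = k \<and> finite (weak_components G L R)"
proof -
  let ?CL = "conn_lengths G L R"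
  have ne: "?CL \<noteq> {}"
  proof
    assume "?CL = {}"
    then have "min_weak_conn_len G L R = \<infinity>" unfolding min_weak_conn_len_def by (simp add: Inf_enat_def)
    with kk show False by simp
  qed
  then obtain m where m: "m \<in> ?CL" by blast
  have "(LEAST x. x \<in> enat ` ?CL) \<in> enat ` ?CL" by (rule LeastI[of _ "enat m"]) (use m in blast)
  then have "enat k \<in> enat ` ?CL" using kk ne unfolding min_weak_conn_len_def Inf_enat_def by simp
  then have kin: "k \<in> ?CL" by auto
  have kmin: "k \<le> m'" if "m' \<in> ?CL" for m'
  proof -
    have "min_weak_conn_len G L R \<le> enat m'" unfolding min_weak_conn_len_def
      by (rule Inf_lower) (use that in blast)
    then show ?thesis using kk by simp
  qed
  have k1: "1 \<le> k" and kP: "int k \<in> P" using kin unfolding conn_lengths_eq by auto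
  have cov: "range C = C ` {0..<int k}"
  proof
    show "range C \<subseteq> C ` {0..<int k}"
    proof
      fix Y assume "Y \<in> range C"
      then obtain n where n: "Y = C n" by blast
      have "n - n mod int k \<in> P" unfolding minus_mod_eq_mult_div using P_mult[OF kP] .
      then have "C n = C (n mod int k)" by (simp add: C_eq_iff)
      moreover have "n mod int k \<in> {0..<int k}" using k1 by simp
      ultimately show "Y \<in> C ` {0..<int k}" using n by blast
    qed
  qed auto
  have inj: "inj_on C {0..<int k}"
  proof (rule inj_onI)
    fix a b assume a: "a \<in> {0..<int k}" and b: "b \<in> {0..<int k}" and eq: "C a = C b"
    then have d: "a - b \<in> P" by (simp add: C_eq_iff)
    show "a = b"
    proof (rule ccontr)
      assume ab: "a \<noteq> b"
      have "\<bar>a - b\<bar> \<in> P"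
      proof (cases "a - b \<ge> 0")
        case True then show ?thesis using d by simp
      next
        case False then show ?thesis using P_neg[OF d] by simp
      qed
      then have "nat \<bar>a - b\<bar> \<in> ?CL" unfolding conn_lengths_eq using ab by simp
      then have "k \<le> nat \<bar>a - b\<bar>" by (rule kmin)
      moreover have "\<bar>a - b\<bar> < int k" using a b by auto
      ultimately show False by simp
    qed
  qed
  have "card (C ` {0..<int k}) = k" using card_image[OF inj] by simp
  then show ?thesis unfolding comps cov by simp
qed

end

lemma tsd_intro:
  assumes "group G" "L \<subseteq> carrier G" "R \<subseteq> carrier G" "l0 \<in> L" "R \<noteq> {}"
    "carrier G = words G (sym_closure G L) <#>\<^bsub>G\<^esub> words G (sym_closure G R)"
  shows "tsd G L R l0"
  using assms unfolding tsd_def tsd_axioms_def by auto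

theorem mainTheorem9:
  fixes G (structure) and L R :: "'a set"
  assumes "group G"
    and "L \<subseteq> carrier G" and "L \<noteq> {}"
    and "R \<subseteq> carrier G" and "R \<noteq> {}"
    and "carrier G = words G (sym_closure G L) <#> words G (sym_closure G R)"
  shows "(min_weak_conn_len G L R = \<infinity> \<longrightarrow> infinite (weak_components G L R))
    \<and> (\<forall>k::nat. min_weak_conn_len G L R = enat k \<longrightarrow>
         card (weak_components G L R) = k \<and> finite (weak_components G L R)
         \<and> (\<forall>C\<in>weak_components G L R. \<forall>D\<in>weak_components G L R. \<exists>f. bij_betw f C D)
         \<and> ((L \<inter> normalizer G L \<noteq> {} \<or> R \<inter> normalizer G R \<noteq> {}) \<longrightarrow>
              (\<forall>C\<in>weak_components G L R. \<forall>D\<in>weak_components G L R. induced_iso G L R C D)))"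
proof -
  obtain l0 where l0: "l0 \<in> L" using assms(3) by blast
  have T: "tsd G L R l0" using tsd_intro[OF assms(1,2,4) l0 assms(5,6)] .
  have P1: "min_weak_conn_len G L R = \<infinity> \<longrightarrow> infinite (weak_components G L R)"
    using tsd.main_inf[OF T] by blast
  have P2: "min_weak_conn_len G L R = enat k \<longrightarrow>
         card (weak_components G L R) = k \<and> finite (weak_components G L R)
         \<and> (\<forall>C\<in>weak_components G L R. \<forall>D\<in>weak_components G L R. \<exists>f. bij_betw f C D)
         \<and> ((L \<inter> normalizer G L \<noteq> {} \<or> R \<inter> normalizer G R \<noteq> {}) \<longrightarrow>
              (\<forall>C\<in>weak_components G L R. \<forall>D\<in>weak_components G L R. induced_iso G L R C D))" for k
  proof
    assume k: "min_weak_conn_len G L R = enat k"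
    have iso: "(L \<inter> normalizer G L \<noteq> {} \<or> R \<inter> normalizer G R \<noteq> {}) \<longrightarrow>
              (\<forall>C\<in>weak_components G L R. \<forall>D\<in>weak_components G L R. induced_iso G L R C D)"
    proof
      assume "L \<inter> normalizer G L \<noteq> {} \<or> R \<inter> normalizer G R \<noteq> {}"
      then show "\<forall>C\<in>weak_components G L R. \<forall>D\<in>weak_components G L R. induced_iso G L R C D"
      proof
        assume "L \<inter> normalizer G L \<noteq> {}"
        then obtain l1 where l1: "l1 \<in> L" "l1 \<in> normalizer G L" by blast
        have T1: "tsd G L R l1" using tsd_intro[OF assms(1,2,4) l1(1) assms(5,6)] .
        show ?thesis using tsd.iso_L[OF T1 l1(2)] .
      next
        assume "R \<inter> normalizer G R \<noteq> {}"
        then obtain r0 where r0: "r0 \<in> R" "r0 \<in> normalizer G R" by blast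
        show ?thesis using tsd.iso_R[OF T r0] .
      qed
    qed
    show "card (weak_components G L R) = k \<and> finite (weak_components G L R)
         \<and> (\<forall>C\<in>weak_components G L R. \<forall>D\<in>weak_components G L R. \<exists>f. bij_betw f C D)
         \<and> ((L \<inter> normalizer G L \<noteq> {} \<or> R \<inter> normalizer G R \<noteq> {}) \<longrightarrow>
              (\<forall>C\<in>weak_components G L R. \<forall>D\<in>weak_components G L R. induced_iso G L R C D))"
      using tsd.main_fin[OF T k] tsd.all_bij[OF T] iso by blast
  qed
  show ?thesis using P1 P2 by blast
qed

end
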